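(* With $s=\sqrt{(u_3+u_4)^2-4u_1u_2}$, $$\sum_{n\geq0}P_n(u_1,u_2,u_3,u_4\mid\alpha,\beta)\frac{t^n}{n!}=e^{\frac12(\beta-\alpha)(u_3-u_4)t}\left(\cosh\Bigl(\frac{st}{2}\Bigr)-\frac{u_3+u_4}{s}\sinh\Bigl(\frac{st}{2}\Bigr)\right)^{-(\alpha+\beta)}.$$
   Context: For $\sigma=\sigma_1\cdots\sigma_m\in\mathfrak S_m$: ${\rm LRmax}(\sigma)$ is the number of $i$ with $\sigma_j<\sigma_i$ for all $j<i$; ${\rm RLmax}(\sigma)$ is the number of $i$ with $\sigma_j<\sigma_i$ for all $j>i$. With the convention $\sigma_0=\sigma_{m+1}=0$: ${\rm W}(\sigma)$ is the number of $i\in[m]$ with $\sigma_{i-1}<\sigma_i>\sigma_{i+1}$; ${\rm V}(\sigma)$ is the number of $i$ with $1<i<m$ and $\sigma_{i-1}>\sigma_i<\sigma_{i+1}$; ${\rm rdd}(\sigma)$ is the number of $i$ with $1<i\le m$ and $\sigma_{i-1}>\sigma_i>\sigma_{i+1}$; ${\rm lda}(\sigma)$ is the number of $i$ with $1\le i<m$ and $\sigma_{i-1}<\sigma_i<\sigma_{i+1}$. Define $$P_n(u_1,u_2,u_3,u_4\mid\alpha,\beta)=\sum_{\sigma\in\mathfrak S_{n+1}}u_1^{{\rm V}(\sigma)}u_2^{{\rm W}(\sigma)-1}u_3^{{\rm rdd}(\sigma)}u_4^{{\rm lda}(\sigma)}\alpha^{{\rm LRmax}(\sigma)-1}\beta^{{\rm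 RLmax}(\sigma)-1}.$$ All series are formal power series in $t$; the bracketed series only involves even powers of $s$ (so no square root actually appears) and has constant term $1$, and $G^{c}:=\exp(c\log G)$ for such $G$. *)

theory Defs
  imports "HOL-Combinatorics.Permutations" "HOL-Computational_Algebra.Formal_Power_Series"
begin

definition ext_perm :: "nat \<Rightarrow> (nat \<Rightarrow> nat) \<Rightarrow> nat \<Rightarrow> nat" where
  "ext_perm m \<sigma> i = (if 1 \<le> i \<and> i \<le> m then \<sigma> i else 0)"

definition LRmax :: "nat \<Rightarrow> (nat \<Rightarrow> nat) \<Rightarrow> nat" where
  "LRmax m \<sigma> = card {i \<in> {1..m}. \<forall>j \<in> {1..<i}. \<sigma> j < \<sigma> i}"

definition RLmax :: "nat \<Rightarrow> (nat \<Rightarrow> nat) \<Rightarrow> nat" where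
  "RLmax m \<sigma> = card {i \<in> {1..m}. \<forall>j \<in> {i<..m}. \<sigma> j < \<sigma> i}"

definition peaksW :: "nat \<Rightarrow> (nat \<Rightarrow> nat) \<Rightarrow> nat" where
  "peaksW m \<sigma> = (let e = ext_perm m \<sigma> in
     card {i \<in> {1..m}. e (i - 1) < e i \<and> e i > e (i + 1)})"

definition valleysV :: "nat \<Rightarrow> (nat \<Rightarrow> nat) \<Rightarrow> nat" where
  "valleysV m \<sigma> = (let e = ext_perm m \<sigma> in
     card {i. 1 < i \<and> i < m \<and> e (i - 1) > e i \<and> e i < e (i + 1)})"

definition rdd :: "nat \<Rightarrow> (nat \<Rightarrow> nat) \<Rightarrow> nat" where
  "rdd m \<sigma> = (let e = ext_perm m \<sigma> in
     card {i. 1 < i \<and> i \<le> m \<and> e (i - 1) > e i \<and> e i > e (i + 1)})"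

definition lda :: "nat \<Rightarrow> (nat \<Rightarrow> nat) \<Rightarrow> nat" where
  "lda m \<sigma> = (let e = ext_perm m \<sigma> in
     card {i. 1 \<le> i \<and> i < m \<and> e (i - 1) < e i \<and> e i < e (i + 1)})"

definition Pn :: "nat \<Rightarrow> 'a::comm_ring_1 \<Rightarrow> 'a \<Rightarrow> 'a \<Rightarrow> 'a \<Rightarrow> 'a \<Rightarrow> 'a \<Rightarrow> 'a" where
  "Pn n u1 u2 u3 u4 \<alpha> \<beta> =
     (\<Sum>\<sigma> \<in> {\<sigma>. \<sigma> permutes {1..n+1}}.
        u1 ^ valleysV (n+1) \<sigma> * u2 ^ (peaksW (n+1) \<sigma> - 1) * u3 ^ rdd (n+1) \<sigma> *
        u4 ^ lda (n+1) \<sigma> * \<alpha> ^ (LRmax (n+1) \<sigma> - 1) * \<beta> ^ (RLmax (n+1) \<sigma> - 1))"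

text \<open>G^c := exp(c log G) for G with constant term 1; log G = ln(1+X) composed with G - 1.\<close>
definition fps_cpow :: "'a::field_char_0 \<Rightarrow> 'a fps \<Rightarrow> 'a fps" where
  "fps_cpow c G = fps_exp c oo (fps_ln 1 oo (G - 1))"

text \<open>The series cosh(st/2) - (u3+u4)/s sinh(st/2) with s^2 = (u3+u4)^2 - 4 u1 u2,
  written out coefficientwise (only even powers of s occur).\<close>
definition bracket_fps :: "'a::field_char_0 \<Rightarrow> 'a \<Rightarrow> 'a \<Rightarrow> 'a \<Rightarrow> 'a fps" where
  "bracket_fps u1 u2 u3 u4 = (let D = (u3 + u4)^2 - 4 * u1 * u2 in
     Abs_fps (\<lambda>n. if even n then D ^ (n div 2) / (2 ^ n * fact n)
                  else - (u3 + u4) * D ^ (n div 2) / (2 ^ n * fact n)))"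

end

theory Submission
  imports Defs "HOL-Combinatorics.Multiset_Permutations"
begin


fun wt :: "(bool \<Rightarrow> bool \<Rightarrow> 'a::comm_monoid_mult) \<Rightarrow> bool \<Rightarrow> bool \<Rightarrow> nat list \<Rightarrow> 'a" where
  "wt f bl br [] = 1"
| "wt f bl br [x] = f bl br"
| "wt f bl br (x # y # ys) = f bl (x < y) * wt f (y < x) br (y # ys)"

lemma wt_split:
  "wt f bl br (L @ x # R) =
     (if L = [] then 1 else wt f bl (last L < x) L) *
     f (if L = [] then bl else x < last L) (if R = [] then br else x < hd R) *
     (if R = [] then 1 else wt f (hd R < x) br R)"
proof (induction L arbitrary: bl)
  case Nil
  then show ?case by (cases R) auto
next
  case (Cons a L)
  show ?case
  proof (cases L)
    case Nil
    then show ?thesis by (cases R) (auto simp: mult.assoc)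
  next
    case (Cons b L')
    then show ?thesis using Cons.IH[of "b < a"] by (simp add: mult.assoc)
  qed
qed

lemma wt_split_max:
  assumes "\<forall>y\<in>set L \<union> set R. y < x"
  shows "wt f bl br (L @ x # R) = wt f bl True L * f (L = [] \<and> bl) (R = [] \<and> br) * wt f True br R"
  using assms by (subst wt_split) (cases L rule: rev_cases; cases R; auto)

lemma wt_split_min:
  assumes "\<forall>y\<in>set L \<union> set R. x < y"
  shows "wt f bl br (L @ x # R) = wt f bl False L * f (L \<noteq> [] \<or> bl) (R \<noteq> [] \<or> br) * wt f False br R"
  using assms by (subst wt_split) (cases L rule: rev_cases; cases R; auto)

lemma wt_map:
  assumes "strict_mono_on (set w) g"
  shows "wt f bl br (map g w) = wt f bl br w"
  using assms
proof (induction f bl br w rule: wt.induct)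
  case (3 f bl br x y ys)
  have "strict_mono_on (set (y # ys)) g"
    using 3(2) by (simp add: strict_mono_on_def)
  moreover have "g x < g y \<longleftrightarrow> x < y" "g y < g x \<longleftrightarrow> y < x"
    using strict_mono_on_less[OF 3(2)] by auto
  ultimately show ?case using 3(1) by simp
qed auto

definition lrm :: "nat list \<Rightarrow> nat" where
  "lrm w = card {i. i < length w \<and> (\<forall>j<i. w ! j < w ! i)}"

definition rlm :: "nat list \<Rightarrow> nat" where
  "rlm w = card {i. i < length w \<and> (\<forall>j. i < j \<and> j < length w \<longrightarrow> w ! j < w ! i)}"

lemma lrm_map:
  assumes "strict_mono_on (set w) g"
  shows "lrm (map g w) = lrm w"
proof -
  have "{i. i < length (map g w) \<and> (\<forall>j<i. map g w ! j < map g w ! i)} =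
        {i. i < length w \<and> (\<forall>j<i. w ! j < w ! i)}"
    using strict_mono_on_less[OF assms] by auto
  then show ?thesis by (simp add: lrm_def)
qed

lemma rlm_map:
  assumes "strict_mono_on (set w) g"
  shows "rlm (map g w) = rlm w"
proof -
  have "{i. i < length (map g w) \<and> (\<forall>j. i < j \<and> j < length (map g w) \<longrightarrow> map g w ! j < map g w ! i)} =
        {i. i < length w \<and> (\<forall>j. i < j \<and> j < length w \<longrightarrow> w ! j < w ! i)}"
    using strict_mono_on_less[OF assms] by auto
  then show ?thesis by (simp add: rlm_def)
qed

lemma lrm_split_max:
  assumes "\<forall>y\<in>set L \<union> set R. y < x"
  shows "lrm (L @ x # R) = Suc (lrm L)"
proof -
  let ?w = "L @ x # R"
  have "{i. i < length ?w \<and> (\<forall>j<i. ?w ! j < ?w ! i)} =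
        insert (length L) {i. i < length L \<and> (\<forall>j<i. L ! j < L ! i)}"
  proof (intro set_eqI iffI)
    fix i assume i: "i \<in> {i. i < length ?w \<and> (\<forall>j<i. ?w ! j < ?w ! i)}"
    show "i \<in> insert (length L) {i. i < length L \<and> (\<forall>j<i. L ! j < L ! i)}"
    proof (cases "length L < i")
      case True
      then have "?w ! length L < ?w ! i" using i by auto
      moreover have "?w ! i \<in> set R" using True i
        by (auto simp: nth_append nth_Cons split: nat.splits)
      moreover have "?w ! i < x" using assms \<open>?w ! i \<in> set R\<close> by simp
      ultimately have False by simp
      then show ?thesis ..
    next
      case False
      then show ?thesis using i by (auto simp: nth_append)
    qed
  next
    fix i assume i: "i \<in> insert (length L) {i. i < length L \<and> (\<forall>j<i. L ! j < L ! i)}"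
    then show "i \<in> {i. i < length ?w \<and> (\<forall>j<i. ?w ! j < ?w ! i)}"
      using assms by (auto simp: nth_append)
  qed
  then show ?thesis by (simp add: lrm_def)
qed

lemma nth_append_shift: "(L @ x # R) ! (k + Suc (length L)) = R ! k"
  by (simp add: nth_append)

lemma rlm_split_max:
  assumes "\<forall>y\<in>set L \<union> set R. y < x"
  shows "rlm (L @ x # R) = Suc (rlm R)"
proof -
  let ?w = "L @ x # R"
  let ?A = "{k. k < length R \<and> (\<forall>j. k < j \<and> j < length R \<longrightarrow> R ! j < R ! k)}"
  let ?B = "{i. i < length ?w \<and> (\<forall>j. i < j \<and> j < length ?w \<longrightarrow> ?w ! j < ?w ! i)}"
  have eq: "?B = insert (length L) ((\<lambda>k. k + Suc (length L)) ` ?A)"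
  proof (intro set_eqI iffI)
    fix i assume i: "i \<in> ?B"
    show "i \<in> insert (length L) ((\<lambda>k. k + Suc (length L)) ` ?A)"
    proof (cases "i < length L")
      case True
      have "length L < length ?w" by simp
      then have "?w ! length L < ?w ! i" using i True by blast
      then have "x < L ! i" using True by (simp add: nth_append)
      moreover have "L ! i \<in> set L" using True by simp
      moreover have "L ! i < x" using assms calculation(2) by simp
      ultimately show ?thesis by simp
    next
      case False
      show ?thesis
      proof (cases "i = length L")
        case False
        define k where "k = i - Suc (length L)"
        have k: "i = k + Suc (length L)" using False \<open>\<not> i < length L\<close> unfolding k_def by simp
        have "k < length R" using i k by simp
        moreover have "R ! j < R ! k" if "k < j" "j < length R" for j
        proof -
          have "?w ! (j + Suc (length L)) < ?w ! i" using i k that by simp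
          then show ?thesis using k by (simp only: nth_append_shift)
        qed
        ultimately have "k \<in> ?A" by simp
        then show ?thesis using k by blast
      qed simp
    qed
  next
    fix i assume i: "i \<in> insert (length L) ((\<lambda>k. k + Suc (length L)) ` ?A)"
    show "i \<in> ?B"
    proof (cases "i = length L")
      case True
      have "?w ! j < ?w ! i" if "i < j" "j < length ?w" for j
      proof -
        define k where "k = j - Suc (length L)"
        have k: "j = k + Suc (length L)" using True that unfolding k_def by simp
        have "k < length R" using that k by simp
        then have "R ! k \<in> set R" by simp
        then have "R ! k < x" using assms by simp
        then show ?thesis using k True by (simp only: nth_append_shift) (simp add: nth_append)
      qed
      then show ?thesis using True by simp
    next
      case False
      then obtain k where k: "k \<in> ?A" "i = k + Suc (length L)" using i by blast
      have "?w ! j < ?w ! i" if "i < j" "j < length ?w" for j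
      proof -
        define j' where "j' = j - Suc (length L)"
        have j': "j = j' + Suc (length L)" using that k unfolding j'_def by simp
        have "k < j'" "j' < length R" using that k j' by simp_all
        then have "R ! j' < R ! k" using k by simp
        then show ?thesis using k j' by (simp only: nth_append_shift)
      qed
      then show ?thesis using k by simp
    qed
  qed
  have "card (insert (length L) ((\<lambda>k. k + Suc (length L)) ` ?A)) = Suc (card ?A)"
    by (subst card_insert_disjoint) (auto simp: card_image inj_on_def)
  then show ?thesis using eq by (simp add: rlm_def)
qed



definition relinv :: "(nat list \<Rightarrow> 'a) \<Rightarrow> bool" where
  "relinv g \<longleftrightarrow> (\<forall>w h. strict_mono_on (set w) h \<longrightarrow> g (map h w) = g w)"

definition sq :: "(nat list \<Rightarrow> 'a::comm_monoid_add) \<Rightarrow> nat \<Rightarrow> 'a" where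
  "sq g k = (\<Sum>w\<in>permutations_of_set {0..<k}. g w)"

lemma sum_relabel:
  fixes g :: "nat list \<Rightarrow> 'a::comm_monoid_add"
  assumes S: "finite S" and g: "relinv g"
  shows "(\<Sum>w\<in>permutations_of_set S. g w) = sq g (card S)"
proof -
  define xs where "xs = sorted_list_of_set S"
  define h where "h = (\<lambda>i. xs ! i)"
  have len: "length xs = card S" using S by (simp add: xs_def)
  have ss: "sorted_wrt (<) xs" by (simp add: xs_def)
  have mono: "strict_mono_on {0..<card S} h"
    by (rule strict_mono_onI) (use ss len in \<open>auto simp: h_def sorted_wrt_iff_nth_less\<close>)
  have img: "h ` {0..<card S} = S"
  proof -
    have "h ` {0..<card S} = set xs" by (auto simp: h_def set_conv_nth len)
    then show ?thesis using S by (simp add: xs_def)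
  qed
  have inj: "inj_on h {0..<card S}" using mono by (rule strict_mono_on_imp_inj_on)
  have P: "permutations_of_set S = map h ` permutations_of_set {0..<card S}"
    using permutations_of_set_image_inj[OF inj] img by simp
  have injm: "inj_on (map h) (permutations_of_set {0..<card S})"
  proof (rule inj_onI)
    fix a b assume a: "a \<in> permutations_of_set {0..<card S}" and b: "b \<in> permutations_of_set {0..<card S}"
      and e: "map h a = map h b"
    have "inj_on h (set a \<union> set b)" using a b inj
      by (auto simp: permutations_of_set_def intro: inj_on_subset)
    then show "a = b" using e inj_on_map_eq_map by blast
  qed
  have "(\<Sum>w\<in>permutations_of_set S. g w) = (\<Sum>w\<in>permutations_of_set {0..<card S}. g (map h w))"
    unfolding P by (rule sum.reindex[OF injm, unfolded comp_def])
  also have "\<dots> = (\<Sum>w\<in>permutations_of_set {0..<card S}. g w)"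
  proof (rule sum.cong[OF refl])
    fix w assume w: "w \<in> permutations_of_set {0..<card S}"
    have "strict_mono_on (set w) h"
      using w mono by (auto simp: permutations_of_set_def intro: monotone_on_subset)
    then show "g (map h w) = g w" using g by (simp add: relinv_def)
  qed
  finally show ?thesis by (simp add: sq_def)
qed

lemma sum_split:
  fixes F :: "nat list \<Rightarrow> 'a::comm_monoid_add"
  assumes S: "finite S" and x: "x \<in> S"
  shows "(\<Sum>w\<in>permutations_of_set S. F w) =
    (\<Sum>T\<in>Pow (S - {x}). \<Sum>L\<in>permutations_of_set T. \<Sum>R\<in>permutations_of_set (S - {x} - T). F (L @ x # R))"
proof -
  let ?U = "S - {x}"
  let ?Q = "Sigma (Pow ?U) (\<lambda>T. permutations_of_set T \<times> permutations_of_set (?U - T))"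
  let ?phi = "\<lambda>(T::nat set, L, R). L @ x # R"
  have "(\<Sum>T\<in>Pow ?U. \<Sum>L\<in>permutations_of_set T. \<Sum>R\<in>permutations_of_set (?U - T). F (L @ x # R))
      = (\<Sum>T\<in>Pow ?U. \<Sum>(L,R)\<in>permutations_of_set T \<times> permutations_of_set (?U - T). F (L @ x # R))"
    by (rule sum.cong[OF refl]) (rule sum.cartesian_product)
  also have "\<dots> = (\<Sum>(T,LR)\<in>?Q. (\<lambda>(L,R). F (L @ x # R)) LR)"
    by (rule sum.Sigma) (use S in auto)
  also have "\<dots> = (\<Sum>q\<in>?Q. F (?phi q))"
    by (rule sum.cong) auto
  also have "\<dots> = (\<Sum>w\<in>permutations_of_set S. F w)"
  proof (rule sum.reindex_bij_betw)
    show "bij_betw ?phi ?Q (permutations_of_set S)"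
    proof (rule bij_betwI')
      fix a b assume a: "a \<in> ?Q" and b: "b \<in> ?Q"
      obtain T L R where aa: "a = (T, L, R)" by (cases a) auto
      obtain T' L' R' where bb: "b = (T', L', R')" by (cases b) auto
      have h: "x \<notin> set L" "x \<notin> set R" "set L = T" "x \<notin> set L'" "x \<notin> set R'" "set L' = T'"
        using a b aa bb by (auto simp: permutations_of_set_def)
      show "(?phi a = ?phi b) = (a = b)"
        using h aa bb append_Cons_eq_iff[OF h(1,2), of L' R'] by auto
    next
      fix a assume a: "a \<in> ?Q"
      obtain T L R where aa: "a = (T, L, R)" by (cases a) auto
      then show "?phi a \<in> permutations_of_set S"
        using a x by (auto simp: permutations_of_set_def)
    next
      fix w assume w: "w \<in> permutations_of_set S"
      then have "x \<in> set w" "distinct w" "set w = S" using x by (auto simp: permutations_of_set_def)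
      then obtain L R where w': "w = L @ x # R" by (meson split_list)
      have "(set L, L, R) \<in> ?Q" using w' \<open>distinct w\<close> \<open>set w = S\<close>
        by (auto simp: permutations_of_set_def)
      moreover have "w = ?phi (set L, L, R)" using w' by simp
      ultimately show "\<exists>a\<in>?Q. w = ?phi a" by blast
    qed
  qed
  finally show ?thesis by simp
qed

lemma sum_pow_card:
  fixes f :: "nat \<Rightarrow> 'a::comm_semiring_1"
  assumes U: "finite U"
  shows "(\<Sum>T\<in>Pow U. f (card T)) = (\<Sum>j\<le>card U. of_nat (card U choose j) * f j)"
proof -
  have "(\<Sum>T\<in>Pow U. f (card T)) = (\<Sum>j\<in>{..card U}. \<Sum>T\<in>{T. T \<in> Pow U \<and> card T = j}. f (card T))"
    by (rule sum.group[symmetric]) (use U in \<open>auto intro: card_mono\<close>)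
  also have "\<dots> = (\<Sum>j\<le>card U. of_nat (card U choose j) * f j)"
  proof (rule sum.cong[OF refl])
    fix j
    have "(\<Sum>T\<in>{T. T \<in> Pow U \<and> card T = j}. f (card T)) = (\<Sum>T\<in>{T. T \<subseteq> U \<and> card T = j}. f j)"
      by (rule sum.cong) auto
    also have "\<dots> = of_nat (card U choose j) * f j"
      using n_subsets[OF U, of j] by simp
    finally show "(\<Sum>T\<in>{T. T \<in> Pow U \<and> card T = j}. f (card T)) = of_nat (card U choose j) * f j" .
  qed
  finally show ?thesis .
qed

lemma conv:
  fixes gL gR :: "nat list \<Rightarrow> 'a::comm_semiring_1"
  assumes S: "finite S" and x: "x \<in> S" and cS: "card S = Suc n"
    and gL: "relinv gL" and gR: "relinv gR"
    and F: "\<And>L R. set L \<union> set R \<subseteq> S - {x} \<Longrightarrow> F (L @ x # R) = gL L * gR R"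
  shows "(\<Sum>w\<in>permutations_of_set S. F w) = (\<Sum>j\<le>n. of_nat (n choose j) * (sq gL j * sq gR (n - j)))"
proof -
  let ?U = "S - {x}"
  have fU: "finite ?U" and cU: "card ?U = n" using S x cS by auto
  have "(\<Sum>w\<in>permutations_of_set S. F w) =
    (\<Sum>T\<in>Pow ?U. \<Sum>L\<in>permutations_of_set T. \<Sum>R\<in>permutations_of_set (?U - T). F (L @ x # R))"
    by (rule sum_split[OF S x])
  also have "\<dots> = (\<Sum>T\<in>Pow ?U. sq gL (card T) * sq gR (n - card T))"
  proof (rule sum.cong[OF refl])
    fix T assume T: "T \<in> Pow ?U"
    have fT: "finite T" using T fU by (auto intro: finite_subset)
    have "(\<Sum>L\<in>permutations_of_set T. \<Sum>R\<in>permutations_of_set (?U - T). F (L @ x # R)) =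
          (\<Sum>L\<in>permutations_of_set T. \<Sum>R\<in>permutations_of_set (?U - T). gL L * gR R)"
      using T by (intro sum.cong refl F) (auto simp: permutations_of_set_def)
    also have "\<dots> = (\<Sum>L\<in>permutations_of_set T. gL L) * (\<Sum>R\<in>permutations_of_set (?U - T). gR R)"
      by (simp add: sum_product)
    also have "\<dots> = sq gL (card T) * sq gR (card (?U - T))"
      using sum_relabel[OF fT gL] sum_relabel[of "?U - T", OF _ gR] fU by simp
    also have "card (?U - T) = n - card T"
      using T fU cU by (simp add: card_Diff_subset finite_subset)
    finally show "(\<Sum>L\<in>permutations_of_set T. \<Sum>R\<in>permutations_of_set (?U - T). F (L @ x # R)) =
          sq gL (card T) * sq gR (n - card T)" .
  qed
  also have "\<dots> = (\<Sum>j\<le>n. of_nat (n choose j) * (sq gL j * sq gR (n - j)))"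
    using sum_pow_card[OF fU, of "\<lambda>j. sq gL j * sq gR (n - j)"] cU by simp
  finally show ?thesis .
qed

definition egf :: "(nat \<Rightarrow> 'a::field_char_0) \<Rightarrow> 'a fps" where
  "egf s = Abs_fps (\<lambda>n. s n / fact n)"

lemma egf_mult:
  fixes x y :: "nat \<Rightarrow> 'a::field_char_0"
  shows "egf x * egf y = egf (\<lambda>n. \<Sum>j\<le>n. of_nat (n choose j) * (x j * y (n - j)))"
proof (rule fps_ext)
  fix n
  have "fps_nth (egf x * egf y) n = (\<Sum>j\<le>n. x j / fact j * (y (n - j) / fact (n - j)))"
    by (simp add: egf_def fps_mult_nth atLeast0AtMost)
  also have "\<dots> = (\<Sum>j\<le>n. of_nat (n choose j) * (x j * y (n - j)) / fact n)"
  proof (rule sum.cong[OF refl])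
    fix j assume j: "j \<in> {..n}"
    then have "of_nat (n choose j) = (fact n / (fact j * fact (n - j)) :: 'a)"
      by (intro binomial_fact) auto
    then show "x j / fact j * (y (n - j) / fact (n - j)) = of_nat (n choose j) * (x j * y (n - j)) / fact n"
      by (simp add: field_simps)
  qed
  also have "\<dots> = fps_nth (egf (\<lambda>n. \<Sum>j\<le>n. of_nat (n choose j) * (x j * y (n - j)))) n"
    by (simp add: egf_def sum_divide_distrib)
  finally show "fps_nth (egf x * egf y) n = fps_nth (egf (\<lambda>n. \<Sum>j\<le>n. of_nat (n choose j) * (x j * y (n - j)))) n" .
qed

lemma egf_deriv:
  fixes s :: "nat \<Rightarrow> 'a::field_char_0"
  shows "fps_deriv (egf s) = egf (\<lambda>n. s (Suc n))"
proof (rule fps_ext)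
  fix n
  show "fps_nth (fps_deriv (egf s)) n = fps_nth (egf (\<lambda>n. s (Suc n))) n"
    by (simp add: egf_def fps_deriv_nth fact_Suc field_simps del: of_nat_Suc)
qed



definition tau :: "'a \<Rightarrow> 'a \<Rightarrow> 'a \<Rightarrow> 'a \<Rightarrow> bool \<Rightarrow> bool \<Rightarrow> 'a::comm_ring_1" where
  "tau u1 u2 u3 u4 a b = (if a then (if b then u1 * u2 else u3) else (if b then u4 else 1))"

lemma relinv_wt_pow:
  assumes "\<And>w h. strict_mono_on (set w) h \<Longrightarrow> st (map h w) = st w"
  shows "relinv (\<lambda>w. wt f bl br w * c ^ st w)"
  unfolding relinv_def by (auto simp: assms wt_map)

lemma relinv_wt_pow2:
  assumes "\<And>w h. strict_mono_on (set w) h \<Longrightarrow> st (map h w) = st w"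
    and "\<And>w h. strict_mono_on (set w) h \<Longrightarrow> st' (map h w) = st' w"
  shows "relinv (\<lambda>w. wt f bl br w * c ^ st w * d ^ st' w)"
  unfolding relinv_def by (auto simp: assms wt_map)

lemma relinv_wt_end:
  shows "relinv (\<lambda>w. c * g (w = []) * wt f bl br w)"
  unfolding relinv_def by (auto simp: wt_map)

lemma sq_empty: "sq g 0 = g []"
  by (simp add: sq_def)

lemma sq_cmult: "sq (\<lambda>w. c * g w) = (\<lambda>k. (c::'a::comm_semiring_1) * sq g k)"
  by (rule ext) (simp add: sq_def sum_distrib_left)

lemma perm_upto_nonempty: "w \<in> permutations_of_set {0..<Suc k} \<Longrightarrow> w \<noteq> []"
  by (auto simp: permutations_of_set_def)

lemma sq_cong_nonempty:
  assumes "\<And>w. w \<noteq> [] \<Longrightarrow> g w = g' w"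
  shows "sq g (Suc k) = sq g' (Suc k)"
  unfolding sq_def by (rule sum.cong[OF refl]) (use assms perm_upto_nonempty in blast)

lemma max_decomp:
  fixes gL gR :: "nat list \<Rightarrow> 'a::comm_semiring_1"
  assumes gL: "relinv gL" and gR: "relinv gR"
    and F: "\<And>L R x. \<forall>y\<in>set L \<union> set R. y < x \<Longrightarrow> F (L @ x # R) = gL L * gR R"
  shows "sq F (Suc n) = (\<Sum>j\<le>n. of_nat (n choose j) * (sq gL j * sq gR (n - j)))"
proof -
  have "sq F (Suc n) = (\<Sum>w\<in>permutations_of_set {0..<Suc n}. F w)" by (simp add: sq_def)
  also have "\<dots> = (\<Sum>j\<le>n. of_nat (n choose j) * (sq gL j * sq gR (n - j)))"
    by (rule conv[OF _ _ _ gL gR, of _ n]) (auto intro!: F)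
  finally show ?thesis .
qed

lemma min_decomp:
  fixes gL gR :: "nat list \<Rightarrow> 'a::comm_semiring_1"
  assumes gL: "relinv gL" and gR: "relinv gR"
    and F: "\<And>L R x. \<forall>y\<in>set L \<union> set R. x < y \<Longrightarrow> F (L @ x # R) = gL L * gR R"
  shows "sq F (Suc n) = (\<Sum>j\<le>n. of_nat (n choose j) * (sq gL j * sq gR (n - j)))"
proof -
  have "sq F (Suc n) = (\<Sum>w\<in>permutations_of_set {0..<Suc n}. F w)" by (simp add: sq_def)
  also have "\<dots> = (\<Sum>j\<le>n. of_nat (n choose j) * (sq gL j * sq gR (n - j)))"
    by (rule conv[OF _ _ _ gL gR, of _ 0]) (auto intro!: F)
  finally show ?thesis .
qed

lemma egf_cmult: "egf (\<lambda>n. c * s n) = fps_const (c::'a::field_char_0) * egf s"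
  by (rule fps_ext) (simp add: egf_def)

context
  fixes u1 u2 u3 u4 :: "'a::field_char_0"
begin

abbreviation "ff \<equiv> tau u1 u2 u3 u4"

definition gA :: "'a \<Rightarrow> nat list \<Rightarrow> 'a" where "gA \<alpha> w = wt ff False True w * \<alpha> ^ lrm w"
definition gB :: "'a \<Rightarrow> nat list \<Rightarrow> 'a" where "gB \<beta> w = wt ff True False w * \<beta> ^ rlm w"
definition gC :: "nat list \<Rightarrow> 'a" where "gC w = wt ff True True w"
definition gE4 :: "nat list \<Rightarrow> 'a" where "gE4 w = 1 * ff False (w = []) * wt ff True True w"
definition gE3 :: "nat list \<Rightarrow> 'a" where "gE3 w = 1 * (\<lambda>b. ff b False) (w = []) * wt ff True True w"
definition gF :: "'a \<Rightarrow> 'a \<Rightarrow> nat list \<Rightarrow> 'a" where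
  "gF \<alpha> \<beta> w = wt ff False False w * \<alpha> ^ (lrm w - 1) * \<beta> ^ (rlm w - 1)"

lemma relinv_gA: "relinv (gA \<alpha>)"
  unfolding gA_def[abs_def] by (rule relinv_wt_pow) (rule lrm_map)
lemma relinv_gB: "relinv (gB \<beta>)"
  unfolding gB_def[abs_def] by (rule relinv_wt_pow) (rule rlm_map)
lemma relinv_gE4: "relinv gE4"
  unfolding gE4_def[abs_def] by (rule relinv_wt_end)
lemma relinv_gE3: "relinv gE3"
  unfolding gE3_def[abs_def] by (rule relinv_wt_end)
lemma relinv_gC: "relinv gC"
  unfolding gC_def[abs_def] using relinv_wt_pow[of "\<lambda>_. 0" _ _ _ 1] by simp

lemma recA: "sq (gA \<alpha>) (Suc n) = (\<Sum>j\<le>n. of_nat (n choose j) * (sq (gA \<alpha>) j * sq (\<lambda>w. \<alpha> * gE4 w) (n - j)))"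
proof (rule max_decomp[OF relinv_gA])
  show "relinv (\<lambda>w. \<alpha> * gE4 w)" using relinv_gE4 by (simp add: relinv_def)
  fix L R :: "nat list" and x :: nat assume h: "\<forall>y\<in>set L \<union> set R. y < x"
  show "gA \<alpha> (L @ x # R) = gA \<alpha> L * (\<alpha> * gE4 R)"
    unfolding gA_def gE4_def wt_split_max[OF h] lrm_split_max[OF h]
    by (simp add: tau_def mult_ac)
qed

lemma recB: "sq (gB \<beta>) (Suc n) = (\<Sum>j\<le>n. of_nat (n choose j) * (sq (\<lambda>w. \<beta> * gE3 w) j * sq (gB \<beta>) (n - j)))"
proof (rule max_decomp[OF _ relinv_gB])
  show "relinv (\<lambda>w. \<beta> * gE3 w)" using relinv_gE3 by (simp add: relinv_def)
  fix L R :: "nat list" and x :: nat assume h: "\<forall>y\<in>set L \<union> set R. y < x"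
  show "gB \<beta> (L @ x # R) = (\<beta> * gE3 L) * gB \<beta> R"
    unfolding gB_def gE3_def wt_split_max[OF h] rlm_split_max[OF h]
    by (simp add: tau_def mult_ac)
qed

lemma recC: "sq gC (Suc n) = (\<Sum>j\<le>n. of_nat (n choose j) * (sq (gB 1) j * sq (\<lambda>w. (u1 * u2) * gA 1 w) (n - j)))"
proof (rule min_decomp[OF relinv_gB])
  show "relinv (\<lambda>w. (u1 * u2) * gA 1 w)" using relinv_gA by (simp add: relinv_def)
  fix L R :: "nat list" and x :: nat assume h: "\<forall>y\<in>set L \<union> set R. x < y"
  show "gC (L @ x # R) = gB 1 L * ((u1 * u2) * gA 1 R)"
    unfolding gC_def gA_def gB_def wt_split_min[OF h]
    by (simp add: tau_def mult_ac)
qed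

lemma recF: "sq (gF \<alpha> \<beta>) (Suc n) = (\<Sum>j\<le>n. of_nat (n choose j) * (sq (gA \<alpha>) j * sq (gB \<beta>) (n - j)))"
proof (rule max_decomp[OF relinv_gA relinv_gB])
  fix L R :: "nat list" and x :: nat assume h: "\<forall>y\<in>set L \<union> set R. y < x"
  show "gF \<alpha> \<beta> (L @ x # R) = gA \<alpha> L * gB \<beta> R"
    unfolding gF_def gA_def gB_def wt_split_max[OF h] lrm_split_max[OF h] rlm_split_max[OF h]
    by (simp add: tau_def mult_ac)
qed

definition "EA \<alpha> = egf (sq (gA \<alpha>))"
definition "EB \<beta> = egf (sq (gB \<beta>))"
definition "EC = egf (sq gC)"

lemma EA0: "fps_nth (EA \<alpha>) 0 = 1" by (simp add: EA_def egf_def sq_empty gA_def lrm_def)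
lemma EB0: "fps_nth (EB \<beta>) 0 = 1" by (simp add: EB_def egf_def sq_empty gB_def rlm_def)
lemma EC0: "fps_nth EC 0 = 1" by (simp add: EC_def egf_def sq_empty gC_def)

lemma egf_E4: "egf (sq gE4) = fps_const u4 + (EC - 1)"
proof (rule fps_ext)
  fix n show "fps_nth (egf (sq gE4)) n = fps_nth (fps_const u4 + (EC - 1)) n"
  proof (cases n)
    case 0 then show ?thesis by (simp add: egf_def sq_empty gE4_def EC_def gC_def tau_def)
  next
    case (Suc k)
    have "sq gE4 (Suc k) = sq gC (Suc k)"
      by (rule sq_cong_nonempty) (simp add: gE4_def gC_def tau_def)
    then show ?thesis using Suc by (simp add: egf_def EC_def)
  qed
qed

lemma egf_E3: "egf (sq gE3) = fps_const u3 + (EC - 1)"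
proof (rule fps_ext)
  fix n show "fps_nth (egf (sq gE3)) n = fps_nth (fps_const u3 + (EC - 1)) n"
  proof (cases n)
    case 0 then show ?thesis by (simp add: egf_def sq_empty gE3_def EC_def gC_def tau_def)
  next
    case (Suc k)
    have "sq gE3 (Suc k) = sq gC (Suc k)"
      by (rule sq_cong_nonempty) (simp add: gE3_def gC_def tau_def)
    then show ?thesis using Suc by (simp add: egf_def EC_def)
  qed
qed

lemma derivA: "fps_deriv (EA \<alpha>) = EA \<alpha> * (fps_const \<alpha> * (fps_const u4 + (EC - 1)))"
proof -
  have "fps_deriv (EA \<alpha>) = egf (\<lambda>n. sq (gA \<alpha>) (Suc n))" by (simp add: EA_def egf_deriv)
  also have "\<dots> = EA \<alpha> * egf (sq (\<lambda>w. \<alpha> * gE4 w))"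
    by (simp add: recA egf_mult EA_def)
  also have "egf (sq (\<lambda>w. \<alpha> * gE4 w)) = fps_const \<alpha> * (fps_const u4 + (EC - 1))"
    by (simp add: sq_cmult egf_cmult egf_E4)
  finally show ?thesis .
qed

lemma derivB: "fps_deriv (EB \<beta>) = EB \<beta> * (fps_const \<beta> * (fps_const u3 + (EC - 1)))"
proof -
  have "fps_deriv (EB \<beta>) = egf (\<lambda>n. sq (gB \<beta>) (Suc n))" by (simp add: EB_def egf_deriv)
  also have "\<dots> = egf (sq (\<lambda>w. \<beta> * gE3 w)) * EB \<beta>"
    by (simp add: recB egf_mult EB_def)
  also have "egf (sq (\<lambda>w. \<beta> * gE3 w)) = fps_const \<beta> * (fps_const u3 + (EC - 1))"
    by (simp add: sq_cmult egf_cmult egf_E3)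
  finally show ?thesis by (simp add: mult.commute)
qed

lemma derivC: "fps_deriv EC = fps_const (u1 * u2) * (EB 1 * EA 1)"
proof -
  have "fps_deriv EC = egf (\<lambda>n. sq gC (Suc n))" by (simp add: EC_def egf_deriv)
  also have "\<dots> = EB 1 * egf (sq (\<lambda>w. (u1 * u2) * gA 1 w))"
    by (simp add: recC egf_mult EB_def)
  also have "egf (sq (\<lambda>w. (u1 * u2) * gA 1 w)) = fps_const (u1 * u2) * EA 1"
    by (simp add: sq_cmult egf_cmult EA_def)
  finally show ?thesis by (simp add: mult_ac)
qed

lemma EF: "egf (\<lambda>n. sq (gF \<alpha> \<beta>) (Suc n)) = EA \<alpha> * EB \<beta>"
  by (simp add: recF egf_mult EA_def EB_def)

end



lemma mult_nth_agree:
  assumes "\<And>i. i \<le> n \<Longrightarrow> fps_nth X i = fps_nth X' i" "\<And>i. i \<le> n \<Longrightarrow> fps_nth Y i = fps_nth Y' i"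
  shows "fps_nth (X * Y) n = fps_nth (X' * Y') n"
  unfolding fps_mult_nth by (rule sum.cong) (auto simp: assms)

lemma nth_Suc_deriv:
  fixes X :: "'a::field_char_0 fps"
  shows "fps_nth X (Suc n) = fps_nth (fps_deriv X) n / of_nat (Suc n)"
  by (simp del: of_nat_Suc)

lemma lin_unique:
  fixes X Y h :: "'a::field_char_0 fps"
  assumes dX: "fps_deriv X = X * h" and dY: "fps_deriv Y = Y * h" and i: "fps_nth X 0 = fps_nth Y 0"
  shows "X = Y"
proof -
  have "\<forall>m\<le>n. fps_nth X m = fps_nth Y m" for n
  proof (induction n)
    case 0 then show ?case using i by simp
  next
    case (Suc n)
    have "fps_nth (X * h) n = fps_nth (Y * h) n"
      by (rule mult_nth_agree) (use Suc in auto)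
    then have "fps_nth X (Suc n) = fps_nth Y (Suc n)"
      by (simp only: nth_Suc_deriv dX dY)
    then show ?case using Suc by (auto simp: le_Suc_eq)
  qed
  then show ?thesis by (auto intro: fps_ext)
qed

lemma sys_unique:
  fixes A A' B B' K K' :: "'a::field_char_0 fps"
  assumes dA: "fps_deriv A = A * (fps_const a + K)" "fps_deriv A' = A' * (fps_const a + K')"
    and dB: "fps_deriv B = B * (fps_const b + K)" "fps_deriv B' = B' * (fps_const b + K')"
    and dK: "fps_deriv K = fps_const p * (B * A)" "fps_deriv K' = fps_const p * (B' * A')"
    and i: "fps_nth A 0 = fps_nth A' 0" "fps_nth B 0 = fps_nth B' 0" "fps_nth K 0 = fps_nth K' 0"
  shows "A = A' \<and> B = B' \<and> K = K'"
proof -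
  have "\<forall>m\<le>n. fps_nth A m = fps_nth A' m \<and> fps_nth B m = fps_nth B' m \<and> fps_nth K m = fps_nth K' m" for n
  proof (induction n)
    case 0 then show ?case using i by simp
  next
    case (Suc n)
    have cK: "fps_nth (fps_const c + K) i = fps_nth (fps_const c + K') i" if "i \<le> n" for i c
      using Suc that by simp
    have "fps_nth (A * (fps_const a + K)) n = fps_nth (A' * (fps_const a + K')) n"
      by (rule mult_nth_agree) (use Suc cK in auto)
    then have 1: "fps_nth A (Suc n) = fps_nth A' (Suc n)"
      by (simp only: nth_Suc_deriv dA)
    have "fps_nth (B * (fps_const b + K)) n = fps_nth (B' * (fps_const b + K')) n"
      by (rule mult_nth_agree) (use Suc cK in auto)
    then have 2: "fps_nth B (Suc n) = fps_nth B' (Suc n)"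
      by (simp only: nth_Suc_deriv dB)
    have "fps_nth (fps_const p * (B * A)) n = fps_nth (fps_const p * (B' * A')) n"
      by (rule mult_nth_agree) (auto intro: mult_nth_agree simp: Suc[rule_format])
    then have 3: "fps_nth K (Suc n) = fps_nth K' (Suc n)"
      by (simp only: nth_Suc_deriv dK)
    show ?case using Suc 1 2 3 by (auto simp: le_Suc_eq)
  qed
  then show ?thesis by (auto intro: fps_ext)
qed

context
  fixes u1 u2 u3 u4 :: "'a::field_char_0"
begin

abbreviation "GG \<equiv> bracket_fps u1 u2 u3 u4"
abbreviation "DD \<equiv> (u3 + u4)^2 - 4 * u1 * u2"

lemma G_nth: "fps_nth GG n = (if even n then DD ^ (n div 2) / (2 ^ n * fact n)
                  else - (u3 + u4) * DD ^ (n div 2) / (2 ^ n * fact n))"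
  by (simp add: bracket_fps_def Let_def)

lemma G0: "fps_nth GG 0 = 1" by (simp add: G_nth)

lemma G'0: "fps_nth (fps_deriv GG) 0 = - (u3 + u4) / 2" by (simp add: G_nth)

lemma G'': "fps_deriv (fps_deriv GG) = fps_const (DD / 4) * GG"
proof (rule fps_ext)
  fix n
  have f: "fact (Suc (Suc n)) = (of_nat (Suc (Suc n)) * of_nat (Suc n) * fact n :: 'a)"
    by (simp add: algebra_simps)
  have d: "Suc (Suc n) div 2 = Suc (n div 2)" by simp
  have p: "(2::'a) ^ Suc (Suc n) = 4 * 2 ^ n" by simp
  have nz: "(of_nat (Suc n) :: 'a) \<noteq> 0" "(of_nat (Suc (Suc n)) :: 'a) \<noteq> 0" "(fact n :: 'a) \<noteq> 0"
    "(2::'a) ^ n \<noteq> 0" "(1 + of_nat n :: 'a) \<noteq> 0" "(2 + of_nat n :: 'a) \<noteq> 0"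
  proof -
    have e1: "(of_nat (Suc n)::'a) = 1 + of_nat n" and e2: "(of_nat (Suc (Suc n))::'a) = 2 + of_nat n"
      by simp_all
    show "(of_nat (Suc n) :: 'a) \<noteq> 0" "(of_nat (Suc (Suc n)) :: 'a) \<noteq> 0"
      by (rule of_nat_neq_0)+
    show "(fact n :: 'a) \<noteq> 0" "(2::'a) ^ n \<noteq> 0" by simp_all
    show "(1 + of_nat n :: 'a) \<noteq> 0" using of_nat_neq_0[of n, where ?'a='a] unfolding e1 .
    show "(2 + of_nat n :: 'a) \<noteq> 0" using of_nat_neq_0[of "Suc n", where ?'a='a] unfolding e2 .
  qed
  show "fps_nth (fps_deriv (fps_deriv GG)) n = fps_nth (fps_const (DD / 4) * GG) n"
    unfolding fps_deriv_nth fps_mult_left_const_nth G_nth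
    using nz by (simp add: f d p field_simps del: of_nat_Suc fact_Suc)
qed

abbreviation "Ginv \<equiv> inverse GG"

lemma GinvG: "Ginv * GG = 1" using G0 by (intro inverse_mult_eq_1) simp

lemma invariant: "fps_deriv GG * fps_deriv GG - GG * fps_deriv (fps_deriv GG) = fps_const (u1 * u2)"
proof -
  let ?I = "fps_deriv GG * fps_deriv GG - GG * fps_deriv (fps_deriv GG)"
  have "fps_deriv ?I = fps_deriv GG * fps_deriv (fps_deriv GG) - GG * fps_deriv (fps_deriv (fps_deriv GG))"
    by (simp add: algebra_simps)
  also have "\<dots> = 0" unfolding G'' by (simp add: algebra_simps)
  finally have d0: "fps_deriv ?I = 0" .
  have "?I = fps_const (fps_nth ?I 0)" using d0 fps_deriv_eq_0_iff[of ?I] by blast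
  also have "fps_nth ?I 0 = u1 * u2"
  proof -
    have a: "fps_nth (fps_deriv (fps_deriv GG)) 0 = DD / 4" unfolding G'' using G0 by simp
    have b: "fps_nth ?I 0 = fps_nth (fps_deriv GG) 0 * fps_nth (fps_deriv GG) 0 - fps_nth GG 0 * fps_nth (fps_deriv (fps_deriv GG)) 0"
      by (simp only: fps_mult_nth_0 fps_sub_nth)
    show ?thesis unfolding b a G0 G'0 by (simp add: field_simps power2_eq_square)
  qed
  finally show ?thesis .
qed

abbreviation "LL \<equiv> fps_ln 1 oo (GG - 1)"

lemma LL0: "fps_nth LL 0 = 0" by simp

lemma LL_deriv: "fps_deriv LL = Ginv * fps_deriv GG"
proof -
  have g0: "fps_nth (GG - 1) 0 = 0" using G0 by simp
  have "fps_deriv LL = (fps_deriv (fps_ln 1) oo (GG - 1)) * fps_deriv (GG - 1)"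
    by (rule fps_compose_deriv[OF g0])
  also have "fps_deriv (fps_ln (1::'a)) = inverse (1 + fps_X)"
    by (simp add: fps_ln_deriv)
  also have "inverse (1 + fps_X) oo (GG - 1) = inverse ((1 + fps_X) oo (GG - 1))"
    by (rule fps_inverse_compose[OF g0]) simp
  also have "(1 + fps_X) oo (GG - 1) = GG"
    using g0 by (simp add: fps_compose_add_distrib)
  finally show ?thesis by simp
qed

definition "cp c = fps_cpow c GG"

lemma cp_alt: "cp c = fps_exp c oo LL" by (simp add: cp_def fps_cpow_def)

lemma cp0: "fps_nth (cp c) 0 = 1" by (simp add: cp_alt)

lemma cp_deriv: "fps_deriv (cp c) = cp c * (fps_const c * (Ginv * fps_deriv GG))"
proof -
  have "fps_deriv (cp c) = (fps_deriv (fps_exp c) oo LL) * fps_deriv LL"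
    unfolding cp_alt by (rule fps_compose_deriv) simp
  also have "fps_deriv (fps_exp c) oo LL = fps_const c * cp c"
    by (simp add: fps_compose_mult_distrib cp_alt)
  finally show ?thesis by (simp add: LL_deriv mult_ac)
qed

lemma cp_add: "cp a * cp b = cp (a + b)"
  by (simp add: cp_alt fps_exp_add_mult fps_compose_mult_distrib)

lemma cp_m1: "cp (-1) = Ginv"
proof (rule lin_unique)
  show "fps_deriv (cp (-1)) = cp (-1) * (- (Ginv * fps_deriv GG))"
    by (simp add: cp_deriv flip: fps_const_neg)
  show "fps_deriv Ginv = Ginv * (- (Ginv * fps_deriv GG))"
    using G0 by (simp add: fps_inverse_deriv power2_eq_square mult_ac)
  show "fps_nth (cp (-1)) 0 = fps_nth Ginv 0" using G0 cp0 by simp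
qed

definition "Ah \<alpha> = fps_exp (- (\<alpha> * (u3 - u4) / 2)) * cp (- \<alpha>)"
definition "Bh \<beta> = fps_exp (\<beta> * (u3 - u4) / 2) * cp (- \<beta>)"
definition "Kh = fps_const (- ((u3 + u4) / 2)) - Ginv * fps_deriv GG"

lemma Ah0: "fps_nth (Ah \<alpha>) 0 = 1" by (simp add: Ah_def cp0)
lemma Bh0: "fps_nth (Bh \<beta>) 0 = 1" by (simp add: Bh_def cp0)
lemma Kh0: "fps_nth Kh 0 = 0"
proof -
  have "fps_nth Kh 0 = - ((u3 + u4) / 2) - fps_nth Ginv 0 * fps_nth (fps_deriv GG) 0"
    by (simp only: Kh_def fps_sub_nth fps_mult_nth_0 fps_nth_fps_const) simp
  also have "fps_nth Ginv 0 = 1" using G0 by simp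
  also have "- ((u3 + u4) / 2) - 1 * fps_nth (fps_deriv GG) 0 = 0"
    unfolding G'0 by (simp only: mult_1 minus_divide_left diff_self)
  finally show ?thesis .
qed

lemma Ah_deriv: "fps_deriv (Ah \<alpha>) = Ah \<alpha> * (fps_const \<alpha> * (fps_const u4 + Kh))"
proof -
  have "fps_deriv (Ah \<alpha>) = Ah \<alpha> * (fps_const (- (\<alpha> * (u3 - u4) / 2)) + fps_const (- \<alpha>) * (Ginv * fps_deriv GG))"
    by (simp add: Ah_def cp_deriv algebra_simps)
  also have "fps_const (- (\<alpha> * (u3 - u4) / 2)) + fps_const (- \<alpha>) * (Ginv * fps_deriv GG) =
             fps_const \<alpha> * (fps_const u4 + Kh)"
    by (rule fps_ext) (simp add: Kh_def algebra_simps field_simps)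
  finally show ?thesis .
qed

lemma Bh_deriv: "fps_deriv (Bh \<beta>) = Bh \<beta> * (fps_const \<beta> * (fps_const u3 + Kh))"
proof -
  have "fps_deriv (Bh \<beta>) = Bh \<beta> * (fps_const (\<beta> * (u3 - u4) / 2) + fps_const (- \<beta>) * (Ginv * fps_deriv GG))"
    by (simp add: Bh_def cp_deriv algebra_simps)
  also have "fps_const (\<beta> * (u3 - u4) / 2) + fps_const (- \<beta>) * (Ginv * fps_deriv GG) =
             fps_const \<beta> * (fps_const u3 + Kh)"
    by (rule fps_ext) (simp add: Kh_def algebra_simps field_simps)
  finally show ?thesis .
qed

lemma AhBh1: "Bh 1 * Ah 1 = Ginv * Ginv"
proof -
  have "Bh 1 * Ah 1 = (fps_exp ((u3 - u4) / 2) * fps_exp (- ((u3 - u4) / 2))) * (cp (-1) * cp (-1))"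
    by (simp add: Ah_def Bh_def mult_ac)
  also have "fps_exp ((u3 - u4) / 2) * fps_exp (- ((u3 - u4) / 2)) = (1 :: 'a fps)"
    by (simp flip: fps_exp_add_mult)
  finally show ?thesis by (simp add: cp_m1)
qed

lemma Kh_deriv: "fps_deriv Kh = fps_const (u1 * u2) * (Bh 1 * Ah 1)"
proof -
  let ?G' = "fps_deriv GG" and ?G'' = "fps_deriv (fps_deriv GG)"
  have e: "?G' * ?G' = fps_const (u1 * u2) + GG * ?G''" using invariant by (simp add: algebra_simps)
  have "fps_deriv Kh = Ginv * Ginv * (?G' * ?G') - Ginv * ?G''"
    using G0 by (simp add: Kh_def fps_inverse_deriv power2_eq_square algebra_simps)
  also have "\<dots> = fps_const (u1 * u2) * (Ginv * Ginv) + Ginv * (Ginv * GG) * ?G'' - Ginv * ?G''"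
    unfolding e by (simp add: algebra_simps)
  also have "\<dots> = fps_const (u1 * u2) * (Ginv * Ginv)" by (simp add: GinvG)
  finally show ?thesis by (simp add: AhBh1)
qed

end



declare upt_Suc [simp del]

lemma wt_prod:
  "wt f bl br w = (\<Prod>k<length w. f (if k = 0 then bl else w ! k < w ! (k - 1))
                                     (if Suc k = length w then br else w ! k < w ! Suc k))"
proof (induction f bl br w rule: wt.induct)
  case (1 f bl br) then show ?case by simp
next
  case (2 f bl br x) then show ?case by simp
next
  case (3 f bl br x y ys)
  let ?w = "x # y # ys"
  let ?T = "\<lambda>k. f (if k = 0 then bl else ?w ! k < ?w ! (k - 1)) (if Suc k = length ?w then br else ?w ! k < ?w ! Suc k)"
  have "(\<Prod>k<length ?w. ?T k) = ?T 0 * (\<Prod>k<length (y # ys). ?T (Suc k))"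
    by (simp only: length_Cons prod.lessThan_Suc_shift)
  also have "?T 0 = f bl (x < y)" by simp
  also have "(\<Prod>k<length (y # ys). ?T (Suc k)) =
     (\<Prod>k<length (y # ys). f (if k = 0 then y < x else (y # ys) ! k < (y # ys) ! (k - 1))
                                (if Suc k = length (y # ys) then br else (y # ys) ! k < (y # ys) ! Suc k))"
    by (rule prod.cong[OF refl]) (auto split: nat.splits)
  finally show ?case using 3 by simp
qed

definition t2 :: "bool \<Rightarrow> bool \<Rightarrow> real" where
  "t2 a b = (if a then (if b then 1/2 else 1) else (if b then 1 else 2))"
definition t2' :: "bool \<Rightarrow> bool \<Rightarrow> real" where
  "t2' a b = (if a \<and> b then 1/2 else if \<not> a \<and> \<not> b then 2 else 1)"

lemma wt_t2: "distinct w \<Longrightarrow> w \<noteq> [] \<Longrightarrow> wt t2 bl br w = t2' bl br"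
proof (induction t2 bl br w rule: wt.induct)
  case (2 bl br x) then show ?case by (simp add: t2_def t2'_def)
next
  case (3 bl br x y ys)
  then have IH: "wt t2 (y < x) br (y # ys) = t2' (y < x) br" and ne: "x \<noteq> y" by auto
  show ?case using ne by (simp add: IH) (cases "x < y"; cases bl; cases br; auto simp: t2_def t2'_def)
qed simp

lemma prod_bool2:
  fixes g :: "bool \<Rightarrow> bool \<Rightarrow> 'b::comm_monoid_mult"
  assumes "finite I"
  shows "(\<Prod>i\<in>I. g (P i) (Q i)) = g True True ^ card {i\<in>I. P i \<and> Q i} * g True False ^ card {i\<in>I. P i \<and> \<not> Q i}
     * g False True ^ card {i\<in>I. \<not> P i \<and> Q i} * g False False ^ card {i\<in>I. \<not> P i \<and> \<not> Q i}"
  using assms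
proof (induction I rule: finite_induct)
  case empty then show ?case by simp
next
  case (insert a F)
  have c: "card {i \<in> insert a F. R i} = (if R a then Suc (card {i\<in>F. R i}) else card {i\<in>F. R i})" for R
  proof -
    have "{i \<in> insert a F. R i} = (if R a then insert a {i\<in>F. R i} else {i\<in>F. R i})" by auto
    then show ?thesis using insert by (simp add: card_insert_disjoint)
  qed
  note c1 = c[of "\<lambda>i. P i \<and> Q i"] and c2 = c[of "\<lambda>i. P i \<and> \<not> Q i"]
    and c3 = c[of "\<lambda>i. \<not> P i \<and> Q i"] and c4 = c[of "\<lambda>i. \<not> P i \<and> \<not> Q i"]
  show ?case
    apply (simp only: prod.insert[OF insert(1,2)] c1 c2 c3 c4 insert.IH)
    apply (cases "P a"; cases "Q a"; simp add: mult_ac)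
    done
qed

lemma set_Suc_shift: "{i\<in>{1..m}. A i} = Suc ` {k. k < m \<and> A (Suc k)}"
proof (intro set_eqI iffI)
  fix i assume "i \<in> {i\<in>{1..m}. A i}"
  then show "i \<in> Suc ` {k. k < m \<and> A (Suc k)}"
    by (intro image_eqI[of _ _ "i - 1"]) auto
qed auto

lemma card_Suc_shift: "card {i\<in>{1..m}. A i} = card {k. k < m \<and> A (Suc k)}"
  unfolding set_Suc_shift by (simp add: card_image)

context
  fixes m :: nat and \<sigma> :: "nat \<Rightarrow> nat"
  assumes p: "\<sigma> permutes {1..m}"
begin

abbreviation "ww \<equiv> map \<sigma> [1..<Suc m]"
abbreviation "ee \<equiv> ext_perm m \<sigma>"

lemma ww_len: "length ww = m" by simp
lemma ww_nth: "k < m \<Longrightarrow> ww ! k = \<sigma> (Suc k)" by simp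

lemma sig_in: "i \<in> {1..m} \<Longrightarrow> \<sigma> i \<in> {1..m}" using permutes_in_image[OF p] by blast
lemma sig_inj: "\<sigma> i = \<sigma> j \<Longrightarrow> i = j" using permutes_inj[OF p] by (auto dest: injD)

lemma ee_in: "i \<in> {1..m} \<Longrightarrow> ee i = \<sigma> i" by (simp add: ext_perm_def)
lemma ee_0: "ee 0 = 0" by (simp add: ext_perm_def)
lemma ee_Sm: "ee (Suc m) = 0" by (simp add: ext_perm_def)
lemma ee_pos: "i \<in> {1..m} \<Longrightarrow> 0 < ee i" using sig_in ee_in by fastforce
lemma ee_ne_prev: "i \<in> {1..m} \<Longrightarrow> ee (i - 1) \<noteq> ee i"
proof -
  assume i: "i \<in> {1..m}"
  show ?thesis
  proof (cases "i = 1")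
    case True then show ?thesis using ee_pos[OF i] ee_0 by simp
  next
    case False
    then have "i - 1 \<in> {1..m}" using i by auto
    show ?thesis
    proof
      assume "ee (i - 1) = ee i"
      then have "\<sigma> (i - 1) = \<sigma> i" using ee_in[OF \<open>i - 1 \<in> {1..m}\<close>] ee_in[OF i] by simp
      then have "i - 1 = i" by (rule sig_inj)
      then show False using i by auto
    qed
  qed
qed
lemma ee_ne_next: "i \<in> {1..m} \<Longrightarrow> ee (Suc i) \<noteq> ee i"
proof -
  assume i: "i \<in> {1..m}"
  show ?thesis
  proof (cases "i = m")
    case True then show ?thesis using ee_pos[OF i] ee_Sm by simp
  next
    case False
    then have "Suc i \<in> {1..m}" using i by auto
    show ?thesis
    proof
      assume "ee (Suc i) = ee i"
      then have "\<sigma> (Suc i) = \<sigma> i" using ee_in[OF \<open>Suc i \<in> {1..m}\<close>] ee_in[OF i] by simp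
      then have "Suc i = i" by (rule sig_inj)
      then show False by simp
    qed
  qed
qed

lemma wt_ee: "wt f False False ww = (\<Prod>i\<in>{1..m}. f (ee i < ee (i - 1)) (ee i < ee (Suc i)))"
proof -
  have "wt f False False ww = (\<Prod>k<m. f (if k = 0 then False else ww ! k < ww ! (k - 1))
                                     (if Suc k = m then False else ww ! k < ww ! Suc k))"
    by (subst wt_prod) simp
  also have "\<dots> = (\<Prod>k<m. f (ee (Suc k) < ee k) (ee (Suc k) < ee (Suc (Suc k))))"
  proof (rule prod.cong[OF refl])
    fix k assume k: "k \<in> {..<m}"
    have a: "(if k = 0 then False else ww ! k < ww ! (k - 1)) = (ee (Suc k) < ee k)"
    proof (cases k)
      case 0 then show ?thesis by (simp add: ee_0)
    next
      case (Suc k') then show ?thesis using k by (simp add: ext_perm_def)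
    qed
    have b: "(if Suc k = m then False else ww ! k < ww ! Suc k) = (ee (Suc k) < ee (Suc (Suc k)))"
      using k by (auto simp: ext_perm_def)
    show "f (if k = 0 then False else ww ! k < ww ! (k - 1)) (if Suc k = m then False else ww ! k < ww ! Suc k) =
          f (ee (Suc k) < ee k) (ee (Suc k) < ee (Suc (Suc k)))" by (simp only: a b)
  qed
  also have "\<dots> = (\<Prod>i\<in>{1..m}. f (ee i < ee (i - 1)) (ee i < ee (Suc i)))"
    by (simp only: One_nat_def prod.atLeast1_atMost_eq) simp
  finally show ?thesis .
qed

lemma V_eq: "valleysV m \<sigma> = card {i\<in>{1..m}. ee i < ee (i - 1) \<and> ee i < ee (Suc i)}"
proof -
  have "{i. 1 < i \<and> i < m \<and> ee (i - 1) > ee i \<and> ee i < ee (i + 1)} = {i\<in>{1..m}. ee i < ee (i - 1) \<and> ee i < ee (Suc i)}"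
  proof (intro set_eqI iffI)
    fix i assume "i \<in> {i\<in>{1..m}. ee i < ee (i - 1) \<and> ee i < ee (Suc i)}"
    then show "i \<in> {i. 1 < i \<and> i < m \<and> ee (i - 1) > ee i \<and> ee i < ee (i + 1)}"
      using ee_0 ee_Sm by (cases "i = 1"; cases "i = m") auto
  qed auto
  then show ?thesis by (simp add: valleysV_def Let_def)
qed

lemma rdd_eq: "rdd m \<sigma> = card {i\<in>{1..m}. ee i < ee (i - 1) \<and> \<not> ee i < ee (Suc i)}"
proof -
  have "{i. 1 < i \<and> i \<le> m \<and> ee (i - 1) > ee i \<and> ee i > ee (i + 1)} = {i\<in>{1..m}. ee i < ee (i - 1) \<and> \<not> ee i < ee (Suc i)}"
  proof (intro set_eqI iffI)
    fix i assume i: "i \<in> {i\<in>{1..m}. ee i < ee (i - 1) \<and> \<not> ee i < ee (Suc i)}"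
    then have "ee (Suc i) \<noteq> ee i" using ee_ne_next by blast
    then show "i \<in> {i. 1 < i \<and> i \<le> m \<and> ee (i - 1) > ee i \<and> ee i > ee (i + 1)}"
      using i ee_0 by (cases "i = 1") auto
  qed auto
  then show ?thesis by (simp add: rdd_def Let_def)
qed

lemma lda_eq: "lda m \<sigma> = card {i\<in>{1..m}. \<not> ee i < ee (i - 1) \<and> ee i < ee (Suc i)}"
proof -
  have "{i. 1 \<le> i \<and> i < m \<and> ee (i - 1) < ee i \<and> ee i < ee (i + 1)} = {i\<in>{1..m}. \<not> ee i < ee (i - 1) \<and> ee i < ee (Suc i)}"
  proof (intro set_eqI iffI)
    fix i assume i: "i \<in> {i\<in>{1..m}. \<not> ee i < ee (i - 1) \<and> ee i < ee (Suc i)}"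
    then have "ee (i - 1) \<noteq> ee i" using ee_ne_prev by blast
    then show "i \<in> {i. 1 \<le> i \<and> i < m \<and> ee (i - 1) < ee i \<and> ee i < ee (i + 1)}"
      using i ee_Sm by (cases "i = m") auto
  qed auto
  then show ?thesis by (simp add: lda_def Let_def)
qed

lemma W_eq: "peaksW m \<sigma> = card {i\<in>{1..m}. \<not> ee i < ee (i - 1) \<and> \<not> ee i < ee (Suc i)}"
proof -
  have "{i \<in> {1..m}. ee (i - 1) < ee i \<and> ee i > ee (i + 1)} = {i\<in>{1..m}. \<not> ee i < ee (i - 1) \<and> \<not> ee i < ee (Suc i)}"
  proof (intro set_eqI iffI)
    fix i assume i: "i \<in> {i\<in>{1..m}. \<not> ee i < ee (i - 1) \<and> \<not> ee i < ee (Suc i)}"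
    then have "ee (i - 1) \<noteq> ee i" "ee (Suc i) \<noteq> ee i" using ee_ne_prev ee_ne_next by blast+
    then show "i \<in> {i \<in> {1..m}. ee (i - 1) < ee i \<and> ee i > ee (i + 1)}"
      using i by auto
  qed auto
  then show ?thesis by (simp add: peaksW_def Let_def)
qed

lemma W_V: "peaksW m \<sigma> = Suc (valleysV m \<sigma>)" if m: "m \<ge> 1"
proof -
  let ?P = "\<lambda>i. ee i < ee (i - 1)" and ?Q = "\<lambda>i. ee i < ee (Suc i)"
  have d: "distinct ww" using permutes_inj_on[OF p] by (simp add: distinct_map)
  have ne: "ww \<noteq> []" using m by simp
  have "2 = wt t2 False False ww" using wt_t2[OF d ne] by (simp add: t2'_def)
  also have "\<dots> = (\<Prod>i\<in>{1..m}. t2 (?P i) (?Q i))" by (rule wt_ee)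
  also have "\<dots> = t2 True True ^ card {i\<in>{1..m}. ?P i \<and> ?Q i} * t2 True False ^ card {i\<in>{1..m}. ?P i \<and> \<not> ?Q i}
     * t2 False True ^ card {i\<in>{1..m}. \<not> ?P i \<and> ?Q i} * t2 False False ^ card {i\<in>{1..m}. \<not> ?P i \<and> \<not> ?Q i}"
    by (rule prod_bool2) simp
  also have "\<dots> = (1/2) ^ valleysV m \<sigma> * 2 ^ peaksW m \<sigma>"
    unfolding V_eq W_eq by (simp add: t2_def)
  finally have "(2::real) ^ peaksW m \<sigma> = 2 ^ Suc (valleysV m \<sigma>)"
    by (simp add: field_simps power_one_over)
  then show ?thesis by (subst (asm) power_inject_exp) simp_all
qed

lemma LR_eq: "LRmax m \<sigma> = lrm ww"
proof -
  have "LRmax m \<sigma> = card {k. k < m \<and> (\<forall>j\<in>{1..<Suc k}. \<sigma> j < \<sigma> (Suc k))}"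
    unfolding LRmax_def by (rule card_Suc_shift)
  also have "{k. k < m \<and> (\<forall>j\<in>{1..<Suc k}. \<sigma> j < \<sigma> (Suc k))} = {k. k < length ww \<and> (\<forall>j<k. ww ! j < ww ! k)}"
  proof (intro set_eqI iffI)
    fix k assume k: "k \<in> {k. k < m \<and> (\<forall>j\<in>{1..<Suc k}. \<sigma> j < \<sigma> (Suc k))}"
    have "ww ! j < ww ! k" if "j < k" for j
    proof -
      have "Suc j \<in> {1..<Suc k}" using that by simp
      then have "\<sigma> (Suc j) < \<sigma> (Suc k)" using k by blast
      then show ?thesis using that k by (simp add: ww_nth)
    qed
    then show "k \<in> {k. k < length ww \<and> (\<forall>j<k. ww ! j < ww ! k)}" using k by simp
  next
    fix k assume k: "k \<in> {k. k < length ww \<and> (\<forall>j<k. ww ! j < ww ! k)}"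
    have "\<sigma> j < \<sigma> (Suc k)" if "j \<in> {1..<Suc k}" for j
    proof -
      have j0: "j \<noteq> 0" using that by auto
      obtain j' where j': "j = Suc j'" using j0 by (cases j) auto
      have "j' < k" using that j' by simp
      have kk: "\<forall>j<k. ww ! j < ww ! k" using k by blast
      have "ww ! j' < ww ! k" using kk \<open>j' < k\<close> by blast
      then show ?thesis using j' \<open>j' < k\<close> k by (simp add: ww_nth)
    qed
    then show "k \<in> {k. k < m \<and> (\<forall>j\<in>{1..<Suc k}. \<sigma> j < \<sigma> (Suc k))}" using k by simp
  qed
  finally show ?thesis by (simp add: lrm_def)
qed

lemma RL_eq: "RLmax m \<sigma> = rlm ww"
proof -
  have "RLmax m \<sigma> = card {k. k < m \<and> (\<forall>j\<in>{Suc k<..m}. \<sigma> j < \<sigma> (Suc k))}"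
    unfolding RLmax_def by (rule card_Suc_shift)
  also have "{k. k < m \<and> (\<forall>j\<in>{Suc k<..m}. \<sigma> j < \<sigma> (Suc k))} =
     {k. k < length ww \<and> (\<forall>j. k < j \<and> j < length ww \<longrightarrow> ww ! j < ww ! k)}"
  proof (intro set_eqI iffI)
    fix k assume k: "k \<in> {k. k < m \<and> (\<forall>j\<in>{Suc k<..m}. \<sigma> j < \<sigma> (Suc k))}"
    have "ww ! j < ww ! k" if "k < j" "j < m" for j
    proof -
      have "Suc j \<in> {Suc k<..m}" using that by simp
      then have "\<sigma> (Suc j) < \<sigma> (Suc k)" using k by blast
      then show ?thesis using that k by (simp add: ww_nth)
    qed
    then show "k \<in> {k. k < length ww \<and> (\<forall>j. k < j \<and> j < length ww \<longrightarrow> ww ! j < ww ! k)}" using k by simp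
  next
    fix k assume k: "k \<in> {k. k < length ww \<and> (\<forall>j. k < j \<and> j < length ww \<longrightarrow> ww ! j < ww ! k)}"
    have "\<sigma> j < \<sigma> (Suc k)" if "j \<in> {Suc k<..m}" for j
    proof -
      have j0: "j \<noteq> 0" using that by auto
      obtain j' where j': "j = Suc j'" using j0 by (cases j) auto
      have jj: "k < j'" "j' < m" using that j' by auto
      then have "ww ! j' < ww ! k" using k by simp
      then show ?thesis using j' jj k by (simp add: ww_nth)
    qed
    then show "k \<in> {k. k < m \<and> (\<forall>j\<in>{Suc k<..m}. \<sigma> j < \<sigma> (Suc k))}" using k by simp
  qed
  finally show ?thesis by (simp add: rlm_def)
qed

end

lemma perm_list_bij:
  "bij_betw (\<lambda>\<sigma>. map \<sigma> [1..<Suc m]) {\<sigma>. \<sigma> permutes {1..m}} (permutations_of_set {1..m})"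
proof (rule bij_betwI')
  fix \<sigma> \<tau> assume s: "\<sigma> \<in> {\<sigma>. \<sigma> permutes {1..m}}" and t: "\<tau> \<in> {\<sigma>. \<sigma> permutes {1..m}}"
  show "(map \<sigma> [1..<Suc m] = map \<tau> [1..<Suc m]) = (\<sigma> = \<tau>)"
  proof
    assume e: "map \<sigma> [1..<Suc m] = map \<tau> [1..<Suc m]"
    show "\<sigma> = \<tau>"
    proof
      fix i show "\<sigma> i = \<tau> i"
      proof (cases "i \<in> {1..m}")
        case True then show ?thesis using e by (auto simp: map_eq_conv)
      next
        case False then show ?thesis using s t by (simp add: permutes_not_in)
      qed
    qed
  qed simp
next
  fix \<sigma> assume s: "\<sigma> \<in> {\<sigma>. \<sigma> permutes {1..m}}"
  then have "\<sigma> permutes {1..m}" by simp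
  then have p: "\<sigma> permutes {1..m}" by simp
  have su: "set [1..<Suc m] = {1..m}" by auto
  have "distinct (map \<sigma> [1..<Suc m])" using permutes_inj_on[OF p] by (simp add: distinct_map)
  moreover have "set (map \<sigma> [1..<Suc m]) = {1..m}" using permutes_image[OF p] su by simp
  ultimately show "map \<sigma> [1..<Suc m] \<in> permutations_of_set {1..m}"
    by (simp add: permutations_of_set_def)
next
  fix w assume w: "w \<in> permutations_of_set {1..m}"
  then have d: "distinct w" and sw: "set w = {1..m}"
    by (auto simp: permutations_of_set_def)
  have len: "length w = m" using distinct_card[OF d] sw by simp
  define \<sigma> where "\<sigma> = (\<lambda>i. if i \<in> {1..m} then w ! (i - 1) else i)"
  have bij: "bij_betw \<sigma> {1..m} {1..m}"
  proof (rule bij_betw_imageI)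
    show "inj_on \<sigma> {1..m}"
    proof (rule inj_onI)
      fix i j assume "i \<in> {1..m}" "j \<in> {1..m}" "\<sigma> i = \<sigma> j"
      then show "i = j" using d len by (auto simp: \<sigma>_def nth_eq_iff_index_eq)
    qed
    show "\<sigma> ` {1..m} = {1..m}"
    proof -
      have "\<sigma> ` {1..m} = set w"
      proof (intro set_eqI iffI)
        fix y assume "y \<in> \<sigma> ` {1..m}"
        then show "y \<in> set w" using len by (auto simp: \<sigma>_def)
      next
        fix y assume "y \<in> set w"
        then obtain k where k: "k < m" "w ! k = y" using len by (auto simp: in_set_conv_nth)
        then have "\<sigma> (Suc k) = y" by (simp add: \<sigma>_def)
        then show "y \<in> \<sigma> ` {1..m}" using k by force
      qed
      then show ?thesis using sw by simp
    qed
  qed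
  have "\<sigma> permutes {1..m}" by (rule bij_imp_permutes[OF bij]) (auto simp: \<sigma>_def)
  moreover have "w = map \<sigma> [1..<Suc m]"
    by (rule nth_equalityI) (auto simp: len \<sigma>_def)
  ultimately show "\<exists>\<sigma>\<in>{\<sigma>. \<sigma> permutes {1..m}}. w = map \<sigma> [1..<Suc m]" by blast
qed



lemma relinv_gF: "relinv (gF u1 u2 u3 u4 \<alpha> \<beta>)"
  unfolding gF_def[abs_def] by (rule relinv_wt_pow2) (simp_all add: lrm_map rlm_map)

lemma summand_eq:
  fixes u1 u2 u3 u4 \<alpha> \<beta> :: "'a::field_char_0"
  assumes p: "\<sigma> permutes {1..m}" and m: "m \<ge> 1"
  shows "u1 ^ valleysV m \<sigma> * u2 ^ (peaksW m \<sigma> - 1) * u3 ^ rdd m \<sigma> *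
        u4 ^ lda m \<sigma> * \<alpha> ^ (LRmax m \<sigma> - 1) * \<beta> ^ (RLmax m \<sigma> - 1)
       = gF u1 u2 u3 u4 \<alpha> \<beta> (map \<sigma> [1..<Suc m])"
proof -
  let ?P = "\<lambda>i. ext_perm m \<sigma> i < ext_perm m \<sigma> (i - 1)" and ?Q = "\<lambda>i. ext_perm m \<sigma> i < ext_perm m \<sigma> (Suc i)"
  have "wt (tau u1 u2 u3 u4) False False (map \<sigma> [1..<Suc m]) = (\<Prod>i\<in>{1..m}. tau u1 u2 u3 u4 (?P i) (?Q i))"
    by (rule wt_ee[OF p])
  also have "\<dots> = tau u1 u2 u3 u4 True True ^ card {i\<in>{1..m}. ?P i \<and> ?Q i} * tau u1 u2 u3 u4 True False ^ card {i\<in>{1..m}. ?P i \<and> \<not> ?Q i}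
     * tau u1 u2 u3 u4 False True ^ card {i\<in>{1..m}. \<not> ?P i \<and> ?Q i} * tau u1 u2 u3 u4 False False ^ card {i\<in>{1..m}. \<not> ?P i \<and> \<not> ?Q i}"
    by (rule prod_bool2) simp
  also have "\<dots> = (u1 * u2) ^ valleysV m \<sigma> * u3 ^ rdd m \<sigma> * u4 ^ lda m \<sigma>"
    unfolding V_eq[OF p, symmetric] rdd_eq[OF p, symmetric] lda_eq[OF p, symmetric] by (simp add: tau_def)
  finally have w: "wt (tau u1 u2 u3 u4) False False (map \<sigma> [1..<Suc m]) = (u1 * u2) ^ valleysV m \<sigma> * u3 ^ rdd m \<sigma> * u4 ^ lda m \<sigma>" .
  show ?thesis
    unfolding gF_def w LR_eq[OF p] RL_eq[OF p] W_V[OF p m]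
    by (simp add: power_mult_distrib mult_ac)
qed

lemma Pn_sq:
  fixes u1 u2 u3 u4 \<alpha> \<beta> :: "'a::field_char_0"
  shows "Pn n u1 u2 u3 u4 \<alpha> \<beta> = sq (gF u1 u2 u3 u4 \<alpha> \<beta>) (Suc n)"
proof -
  let ?g = "gF u1 u2 u3 u4 \<alpha> \<beta>"
  have "Pn n u1 u2 u3 u4 \<alpha> \<beta> = (\<Sum>\<sigma>\<in>{\<sigma>. \<sigma> permutes {1..Suc n}}. ?g (map \<sigma> [1..<Suc (Suc n)]))"
    unfolding Pn_def Suc_eq_plus1[symmetric]
    by (rule sum.cong[OF refl]) (rule summand_eq, auto)
  also have "\<dots> = (\<Sum>w\<in>permutations_of_set {1..Suc n}. ?g w)"
    by (rule sum.reindex_bij_betw[OF perm_list_bij])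
  also have "\<dots> = sq ?g (card {1..Suc n})"
    by (rule sum_relabel[OF _ relinv_gF]) simp
  finally show ?thesis by simp
qed

theorem main:
  fixes u1 u2 u3 u4 \<alpha> \<beta> :: "'a::field_char_0"
  shows "Abs_fps (\<lambda>n. Pn n u1 u2 u3 u4 \<alpha> \<beta> / fact n) =
         fps_exp ((\<beta> - \<alpha>) * (u3 - u4) / 2) *
         fps_cpow (- (\<alpha> + \<beta>)) (bracket_fps u1 u2 u3 u4)"
proof -
  let ?EA = "EA u1 u2 u3 u4" and ?EB = "EB u1 u2 u3 u4" and ?EC = "EC u1 u2 u3 u4"
  let ?Ah = "Ah u1 u2 u3 u4" and ?Bh = "Bh u1 u2 u3 u4" and ?Kh = "Kh u1 u2 u3 u4"
  have sys: "?EA 1 = ?Ah 1 \<and> ?EB 1 = ?Bh 1 \<and> ?EC - 1 = ?Kh"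
  proof (rule sys_unique)
    show "fps_deriv (?EA 1) = ?EA 1 * (fps_const u4 + (?EC - 1))" using derivA[of u1 u2 u3 u4 1] by simp
    show "fps_deriv (?Ah 1) = ?Ah 1 * (fps_const u4 + ?Kh)" using Ah_deriv[of u1 u2 u3 u4 1] by simp
    show "fps_deriv (?EB 1) = ?EB 1 * (fps_const u3 + (?EC - 1))" using derivB[of u1 u2 u3 u4 1] by simp
    show "fps_deriv (?Bh 1) = ?Bh 1 * (fps_const u3 + ?Kh)" using Bh_deriv[of u1 u2 u3 u4 1] by simp
    show "fps_deriv (?EC - 1) = fps_const (u1 * u2) * (?EB 1 * ?EA 1)" using derivC[of u1 u2 u3 u4] by simp
    show "fps_deriv ?Kh = fps_const (u1 * u2) * (?Bh 1 * ?Ah 1)" by (rule Kh_deriv)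
    show "fps_nth (?EA 1) 0 = fps_nth (?Ah 1) 0" by (simp add: EA0 Ah0)
    show "fps_nth (?EB 1) 0 = fps_nth (?Bh 1) 0" by (simp add: EB0 Bh0)
    show "fps_nth (?EC - 1) 0 = fps_nth ?Kh 0" by (simp add: EC0 Kh0)
  qed
  then have K: "?EC - 1 = ?Kh" by blast
  have A: "?EA \<alpha> = ?Ah \<alpha>"
  proof (rule lin_unique)
    show "fps_deriv (?EA \<alpha>) = ?EA \<alpha> * (fps_const \<alpha> * (fps_const u4 + ?Kh))" using derivA[of u1 u2 u3 u4 \<alpha>] K by simp
    show "fps_deriv (?Ah \<alpha>) = ?Ah \<alpha> * (fps_const \<alpha> * (fps_const u4 + ?Kh))" by (rule Ah_deriv)
    show "fps_nth (?EA \<alpha>) 0 = fps_nth (?Ah \<alpha>) 0" by (simp add: EA0 Ah0)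
  qed
  have B: "?EB \<beta> = ?Bh \<beta>"
  proof (rule lin_unique)
    show "fps_deriv (?EB \<beta>) = ?EB \<beta> * (fps_const \<beta> * (fps_const u3 + ?Kh))" using derivB[of u1 u2 u3 u4 \<beta>] K by simp
    show "fps_deriv (?Bh \<beta>) = ?Bh \<beta> * (fps_const \<beta> * (fps_const u3 + ?Kh))" by (rule Bh_deriv)
    show "fps_nth (?EB \<beta>) 0 = fps_nth (?Bh \<beta>) 0" by (simp add: EB0 Bh0)
  qed
  have "Abs_fps (\<lambda>n. Pn n u1 u2 u3 u4 \<alpha> \<beta> / fact n) = egf (\<lambda>n. sq (gF u1 u2 u3 u4 \<alpha> \<beta>) (Suc n))"
    by (simp add: egf_def Pn_sq)
  also have "\<dots> = ?EA \<alpha> * ?EB \<beta>" by (rule EF)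
  also have "\<dots> = ?Ah \<alpha> * ?Bh \<beta>" by (simp add: A B)
  also have "\<dots> = (fps_exp (- (\<alpha> * (u3 - u4) / 2)) * fps_exp (\<beta> * (u3 - u4) / 2)) *
                   (cp u1 u2 u3 u4 (- \<alpha>) * cp u1 u2 u3 u4 (- \<beta>))"
    by (simp add: Ah_def Bh_def mult_ac)
  also have "\<dots> = fps_exp (- (\<alpha> * (u3 - u4) / 2) + \<beta> * (u3 - u4) / 2) * cp u1 u2 u3 u4 (- \<alpha> + - \<beta>)"
    by (simp only: cp_add fps_exp_add_mult)
  also have "- (\<alpha> * (u3 - u4) / 2) + \<beta> * (u3 - u4) / 2 = (\<beta> - \<alpha>) * (u3 - u4) / 2"
    by (simp add: field_simps)
  also have "- \<alpha> + - \<beta> = - (\<alpha> + \<beta>)" by simp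
  finally show ?thesis by (simp add: cp_def)
qed



theorem theorem1p5:
  fixes u1 u2 u3 u4 \<alpha> \<beta> :: "'a::field_char_0"
  shows "Abs_fps (\<lambda>n. Pn n u1 u2 u3 u4 \<alpha> \<beta> / fact n) =
         fps_exp ((\<beta> - \<alpha>) * (u3 - u4) / 2) *
         fps_cpow (- (\<alpha> + \<beta>)) (bracket_fps u1 u2 u3 u4)"
  by (rule main)

end
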